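(* Let $m\ge 2$ and let $x=(x_1,\dots,x_m)$ be a sequence of positive integers in which at most one $x_i$ equals $1$. Then $|\textsf{L-NCN}(x)|=\left(\sum_{i=1}^m x_i-1\right)_{m-2}$.
   Context: $(a)_b=a(a-1)\cdots(a-b+1)$ denotes the falling factorial (with $(a)_0=1$). For a sequence $x=(x_1,\dots,x_t)$ of positive integers with sum $N$, $\textsf{L-NC}(x)$ is the set of words $w_1\cdots w_N$ over $[t]$ with exactly $x_i$ occurrences of each letter $i$ and no indices $a<b<c<d$, letters $i\neq j$ with $w_a=w_c=i$, $w_b=w_d=j$ (labeled noncrossing partitions of type $x$). $\textsf{L-NCN}(x)$ is the set of equivalence classes of elements of $\textsf{L-NC}(x)$ under cyclic rotation of words (labeled noncrossing necklaces of type $x$). *)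

theory Defs
  imports Main
begin

definition falling_fact :: "nat \<Rightarrow> nat \<Rightarrow> nat" where
  "falling_fact a b = (\<Prod>i<b. (a - i))"

definition noncrossing :: "nat list \<Rightarrow> bool" where
  "noncrossing w \<longleftrightarrow> \<not> (\<exists>a b c d. a < b \<and> b < c \<and> c < d \<and> d < length w \<and>
      w ! a = w ! c \<and> w ! b = w ! d \<and> w ! a \<noteq> w ! b)"

text \<open>L-NC(x) for x = (x_1,...,x_t) given as a list: words over the alphabet {1..t}
  containing exactly x_i occurrences of the letter i, which are noncrossing.
  (The length is then automatically the sum N of the x_i.)\<close>
definition LNC :: "nat list \<Rightarrow> nat list set" where
  "LNC x = {w. set w \<subseteq> {1..length x} \<and> length w = sum_list x \<and>
              (\<forall>i\<in>{1..length x}. count_list w i = x ! (i - 1)) \<and> noncrossing w}"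

definition LNCN :: "nat list \<Rightarrow> nat list set set" where
  "LNCN x = (\<lambda>w. {rotate k w | k. True}) ` LNC x"

end

theory Submission
  imports Defs "HOL-Library.Sublist"
begin

definition ncr :: "nat list \<Rightarrow> bool" where
  "ncr w \<longleftrightarrow> (\<forall>a b. a \<noteq> b \<longrightarrow> \<not> subseq [a,b,a,b] w)"

lemma ncr_subseq: "subseq u w \<Longrightarrow> ncr w \<Longrightarrow> ncr u"
  unfolding ncr_def using subseq_order.trans by blast

lemma ncr_tl: "ncr (a#t) \<Longrightarrow> ncr t"
  by (erule ncr_subseq[rotated]) auto

lemma ncr_Cons: assumes "ncr t" "t = [] \<or> hd t = a" shows "ncr (a#t)"
  unfolding ncr_def
proof (intro allI impI notI)
  fix p q :: nat assume pq: "p \<noteq> q" and s: "subseq [p,q,p,q] (a#t)"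
  show False
  proof (cases "p = a")
    case True
    with s have s2: "subseq [q,p,q] t" by simp
    then have "t \<noteq> []" by auto
    with assms(2) obtain t' where t: "t = p # t'" using True by (cases t) auto
    with s2 pq have "subseq [q,p,q] t'" by simp
    with t have "subseq [p,q,p,q] t" by simp
    with assms(1) pq show False unfolding ncr_def by blast
  next
    case False
    with s have "subseq [p,q,p,q] t" by simp
    with assms(1) pq show False unfolding ncr_def by blast
  qed
qed

definition rn :: "nat \<Rightarrow> nat \<Rightarrow> nat" where "rn j a = (if a = j then 0 else a)"

lemma rn_same[simp]: "rn j j = 0" and rn_other[simp]: "a \<noteq> j \<Longrightarrow> rn j a = a"
  by (auto simp: rn_def)

fun ren :: "nat \<Rightarrow> nat \<Rightarrow> nat list \<Rightarrow> nat list" where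
  "ren j 0 xs = xs"
| "ren j (Suc n) [] = []"
| "ren j (Suc n) (a#xs) = (if a = 0 then j # ren j n xs else a # ren j (Suc n) xs)"

lemma map_rn_id: "j \<notin> set v \<Longrightarrow> map (rn j) v = v"
  by (induct v) (auto simp: rn_def)

lemma R1: "j \<notin> set v \<Longrightarrow> map (rn j) (ren j n v) = v"
  by (induct j n v rule: ren.induct) (auto simp: rn_def map_rn_id)

lemma R2: "j \<notin> set v \<Longrightarrow> j \<noteq> 0 \<Longrightarrow> count_list (ren j n v) j = min n (count_list v 0)"
proof (induct j n v rule: ren.induct)
  case (1 j xs) then show ?case by (simp add: count_list_0_iff)
qed auto

lemma R3: "j \<noteq> 0 \<Longrightarrow> count_list (ren j n v) 0 = count_list v 0 - n"
  by (induct j n v rule: ren.induct) auto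

lemma R4: "a \<noteq> 0 \<Longrightarrow> a \<noteq> j \<Longrightarrow> count_list (ren j n v) a = count_list v a"
  by (induct j n v rule: ren.induct) auto

lemma R5: "j \<notin> set v \<Longrightarrow> j \<noteq> 0 \<Longrightarrow> \<not> subseq [0,j] (ren j n v)"
proof (induct j n v rule: ren.induct)
  case (1 j xs) then show ?case using list_emb_set[of "(=)" "[0,j]" xs j] by auto
qed auto

lemma R6: "set (ren j n v) \<subseteq> insert j (set v)"
  by (induct j n v rule: ren.induct) auto

lemma R7: "\<not> subseq [0,j] t \<Longrightarrow> j \<noteq> 0 \<Longrightarrow> ren j (count_list t j) (map (rn j) t) = t"
proof (induct t)
  case Nil then show ?case by simp
next
  case (Cons a t)
  show ?case
  proof (cases "a = j")
    case True
    with Cons show ?thesis by auto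
  next
    case False
    show ?thesis
    proof (cases "a = 0")
      case True
      with Cons have "\<not> subseq [j] t" by auto
      then have "j \<notin> set t" by (simp add: subseq_singleton_left)
      have "map (rn j) t = t" using \<open>j \<notin> set t\<close> by (rule map_rn_id)
      with True False \<open>j \<notin> set t\<close> show ?thesis by (simp add: count_list_0_iff)
    next
      case a0: False
      from Cons(2) a0 False have "\<not> subseq [0,j] t" by auto
      with Cons a0 False show ?thesis
        by (cases "count_list t j") auto
    qed
  qed
qed

lemma cnt_map0: "j \<noteq> 0 \<Longrightarrow> count_list (map (rn j) t) 0 = count_list t 0 + count_list t j"
  by (induct t) (auto simp: rn_def)

lemma cnt_mapa: "a \<noteq> 0 \<Longrightarrow> a \<noteq> j \<Longrightarrow> count_list (map (rn j) t) a = count_list t a"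
  by (induct t) (auto simp: rn_def)

lemma subseq_map_inv: "subseq xs (map f ys) \<Longrightarrow> \<exists>zs. subseq zs ys \<and> map f zs = xs"
proof (induct ys arbitrary: xs)
  case Nil then show ?case by (cases xs) auto
next
  case (Cons y ys)
  show ?case
  proof (cases xs)
    case Nil then show ?thesis by auto
  next
    case (Cons x xs')
    show ?thesis
    proof (cases "x = f y")
      case True
      with Cons \<open>subseq xs (map f (y # ys))\<close> have "subseq xs' (map f ys)" by simp
      then obtain zs where "subseq zs ys" "map f zs = xs'" using Cons.hyps by blast
      with Cons True show ?thesis by (intro exI[of _ "y#zs"]) auto
    next
      case False
      with Cons \<open>subseq xs (map f (y # ys))\<close> have "subseq xs (map f ys)" by simp
      then obtain zs where "subseq zs ys" "map f zs = xs" using Cons.hyps by blast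
      then show ?thesis by (intro exI[of _ zs]) auto
    qed
  qed
qed

lemma ncrD: "ncr w \<Longrightarrow> a \<noteq> b \<Longrightarrow> subseq [a,b,a,b] w \<Longrightarrow> False"
  unfolding ncr_def by blast

lemma sub_trans: "subseq xs ys \<Longrightarrow> subseq ys zs \<Longrightarrow> subseq xs zs"
  using subseq_order.trans by blast

lemma K1: assumes "ncr (0 # j # r)" "j \<noteq> 0" shows "\<not> subseq [0,j] (j # r)"
proof
  assume "subseq [0,j] (j # r)"
  with assms(2) have "subseq [0,j] r" by simp
  then have "subseq [0,j,0,j] (0 # j # r)" by simp
  then show False using ncrD[OF assms(1), of 0 j] assms(2) by simp
qed

lemma ncr_merge: assumes w: "ncr (0 # j # r)" and j: "j \<noteq> 0" shows "ncr (map (rn j) (j # r))"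
  unfolding ncr_def
proof (intro allI impI notI)
  fix a b assume ab: "a \<noteq> b" and s: "subseq [a,b,a,b] (map (rn j) (j # r))"
  define t where "t = j # r"
  have k1: "\<not> subseq [0,j] t" using K1[OF w j] t_def by simp
  have wt: "\<And>p q. p \<noteq> q \<Longrightarrow> subseq [p,q,p,q] (0 # t) \<Longrightarrow> False" by (rule ncrD[OF w[folded t_def]])
  have wt': "\<And>p q. p \<noteq> q \<Longrightarrow> subseq [p,q,p,q] t \<Longrightarrow> False"
    by (rule wt, assumption, rule list_emb.list_emb_Cons)
  have s': "subseq [a,b,a,b] (map (rn j) t)" using s unfolding t_def .
  from subseq_map_inv[OF s'] obtain zs where zs: "subseq zs t" "map (rn j) zs = [a,b,a,b]" by (elim exE conjE)
  from zs(2) obtain p q p' q' where z: "zs = [p,q,p',q']"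
    unfolding map_eq_Cons_conv by (elim exE conjE) simp
  have rnv: "\<And>x y. rn j x = y \<Longrightarrow> y \<noteq> 0 \<Longrightarrow> x = y" by (auto simp: rn_def split: if_splits)
  have rn0: "\<And>x. rn j x = 0 \<Longrightarrow> x = 0 \<or> x = j" by (auto simp: rn_def split: if_splits)
  from zs z have e: "rn j p = a" "rn j q = b" "rn j p' = a" "rn j q' = b" by auto
  show False
  proof (cases "a = 0")
    case False
    then have pa: "p = a" "p' = a" using rnv[OF e(1)] rnv[OF e(3)] by auto
    show False
    proof (cases "b = 0")
      case False
      then have "q = b" "q' = b" using rnv[OF e(2)] rnv[OF e(4)] by auto
      with pa zs z have "subseq [a,b,a,b] t" by simp
      from wt'[OF ab this] show False .
    next
      case True
      then have "q = 0 \<or> q = j" "q' = 0 \<or> q' = j" using rn0[of q] rn0[of q'] e by auto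
      moreover have aj: "a \<noteq> j" using e pa \<open>a \<noteq> 0\<close> by (auto simp: rn_def split: if_splits)
      ultimately consider "q = q'" | "q = j" "q' = 0" | "q = 0" "q' = j" by blast
      then show False
      proof cases
        case 1 with pa zs z ab e show False using wt'[of a q] by (auto simp: rn_def split: if_splits)
      next
        case 2
        with pa zs z have "subseq [a,j,a,0] (j # r)" by (simp add: t_def)
        with aj have "subseq [a,j,a,0] r" by simp
        then have "subseq [a,j,a] r" by (rule sub_trans[rotated]) simp
        then have "subseq [j,a,j,a] t" by (simp add: t_def)
        with aj show False using wt'[of j a] by simp
      next
        case 3
        with pa zs z have "subseq [a,0,a,j] t" by simp
        then have "subseq [0,j] t" by (rule sub_trans[rotated]) simp
        with k1 show False by simp
      qed
    qed
  next
    case True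
    then have bn: "b \<noteq> 0" using ab by auto
    then have qb: "q = b" "q' = b" using rnv[OF e(2)] rnv[OF e(4)] by auto
    have bj: "b \<noteq> j" using e qb bn by (auto simp: rn_def split: if_splits)
    have "p = 0 \<or> p = j" "p' = 0 \<or> p' = j" using rn0[of p] rn0[of p'] e True by auto
    then consider "p = p'" | "p = j" "p' = 0" | "p = 0" "p' = j" by blast
    then show False
    proof cases
      case 1 with qb zs z have "subseq [p,b,p,b] t" by simp
      moreover have "p \<noteq> b" using 1 \<open>p = 0 \<or> p = j\<close> bn bj by auto
      ultimately show False using wt'[of p b] by simp
    next
      case 2
      with qb zs z have "subseq [j,b,0,b] t" by simp
      then have "subseq [b,0,b] t" by (rule sub_trans[rotated]) simp
      then have "subseq [0,b,0,b] (0#t)" by simp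
      with bn show False using wt[of 0 b] by simp
    next
      case 3
      with qb zs z have "subseq [0,b,j,b] t" by simp
      then have "subseq [0,j] t" by (rule sub_trans[rotated]) (simp add: bj)
      with k1 show False by simp
    qed
  qed
qed

lemma ncr_split: assumes v: "ncr v" "v \<noteq> []" "hd v = 0" and j: "j \<notin> set v" "j \<noteq> 0"
  shows "ncr (0 # ren j n v)"
  unfolding ncr_def
proof (intro allI impI notI)
  fix a b assume ab: "a \<noteq> b" and s: "subseq [a,b,a,b] (0 # ren j n v)"
  define u where "u = ren j n v"
  have nu: "\<not> subseq [0,j] u" using R5[OF j] u_def by simp
  have m: "map (rn j) (0 # u) = 0 # v" using R1[OF j(1)] j(2) u_def by simp
  have n0v: "ncr (0 # v)" using ncr_Cons[OF v(1)] v(3) by simp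
  have "subseq (map (rn j) [a,b,a,b]) (map (rn j) (0 # u))" by (rule subseq_map) (use s u_def in simp)
  then have "subseq [rn j a, rn j b, rn j a, rn j b] (0 # v)" unfolding m by (simp only: list.map)
  then have "rn j a = rn j b" using ncrD[OF n0v, of "rn j a" "rn j b"] by auto
  with ab have "(a = 0 \<and> b = j) \<or> (a = j \<and> b = 0)" by (auto simp: rn_def split: if_splits)
  then show False
  proof
    assume "a = 0 \<and> b = j"
    with s have "subseq [0,j,0,j] (0 # u)" by (simp add: u_def)
    then have "subseq [j,0,j] u" by simp
    then have "subseq [0,j] u" by (rule sub_trans[rotated]) (simp add: j)
    with nu show False by simp
  next
    assume "a = j \<and> b = 0"
    with s j have "subseq [j,0,j,0] u" by (simp add: u_def)
    then have "subseq [0,j] u" by (rule sub_trans[rotated]) (simp add: j)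
    with nu show False by simp
  qed
qed

definition D :: "nat set \<Rightarrow> (nat \<Rightarrow> nat) \<Rightarrow> nat \<Rightarrow> nat list set" where
  "D S g c = {w. set w \<subseteq> insert 0 S \<and> count_list w 0 = c \<and> (\<forall>j\<in>S. count_list w j = g j)
     \<and> ncr w \<and> (w \<noteq> [] \<longrightarrow> hd w = 0)}"

lemma len_sum: "set w \<subseteq> A \<Longrightarrow> finite A \<Longrightarrow> length w = (\<Sum>a\<in>A. count_list w a)"
proof (induct w)
  case Nil then show ?case by simp
next
  case (Cons x w)
  have "(\<Sum>a\<in>A. count_list (x#w) a) = (\<Sum>a\<in>A. count_list w a + (if x = a then 1 else 0))"
    by (rule sum.cong) auto
  also have "\<dots> = (\<Sum>a\<in>A. count_list w a) + 1"
    using Cons.prems by (simp add: sum.distrib)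
  finally show ?case using Cons by simp
qed

lemma D_len: assumes "finite S" "0 \<notin> S" "w \<in> D S g c" shows "length w = c + sum g S"
proof -
  have "length w = (\<Sum>a\<in>insert 0 S. count_list w a)"
    using assms by (intro len_sum) (auto simp: D_def)
  also have "\<dots> = c + (\<Sum>a\<in>S. count_list w a)" using assms by (simp add: D_def)
  also have "(\<Sum>a\<in>S. count_list w a) = sum g S" using assms(3) by (intro sum.cong) (auto simp: D_def)
  finally show ?thesis .
qed

lemma D_fin: assumes "finite S" "0 \<notin> S" shows "finite (D S g c)"
proof -
  have "D S g c \<subseteq> {w. set w \<subseteq> insert 0 S \<and> length w = c + sum g S}"
    using D_len[OF assms] by (auto simp: D_def)
  moreover have "finite {w. set w \<subseteq> insert 0 S \<and> length w = c + sum g S}"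
    using assms by (intro finite_lists_length_eq) auto
  ultimately show ?thesis by (rule finite_subset)
qed

lemma D_rec:
  assumes S: "finite S" "0 \<notin> S" and gp: "\<forall>j\<in>S. g j > 0" and c: "c > 0"
  shows "card (D S g c) = card (D S g (c-1)) + (\<Sum>j\<in>S. card (D (S-{j}) g (c - 1 + g j)))"
proof -
  define P0 where "P0 = {w\<in>D S g c. tl w = [] \<or> hd (tl w) = 0}"
  define P where "P j = {w\<in>D S g c. tl w \<noteq> [] \<and> hd (tl w) = j}" for j
  have ne: "w \<noteq> [] \<and> hd w = 0" if "w \<in> D S g c" for w
  proof -
    from that c have "w \<noteq> []" by (auto simp: D_def)
    with that show ?thesis by (auto simp: D_def)
  qed
  have cover: "D S g c = P0 \<union> (\<Union>j\<in>S. P j)"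
  proof (intro equalityI subsetI)
    fix w assume w: "w \<in> D S g c"
    show "w \<in> P0 \<union> (\<Union>j\<in>S. P j)"
    proof (cases "tl w = [] \<or> hd (tl w) = 0")
      case True with w show ?thesis by (auto simp: P0_def)
    next
      case False
      then have "hd (tl w) \<in> set w" by (metis hd_in_set list.set_sel(2) list.sel(2))
      with w False have "hd (tl w) \<in> S" by (auto simp: D_def)
      with w False show ?thesis by (auto simp: P_def)
    qed
  qed (auto simp: P0_def P_def)
  have fD: "finite (D S g c)" using D_fin[OF S] .
  have fP: "finite (P j)" for j using fD by (auto simp: P_def)
  have fP0: "finite P0" using fD by (auto simp: P0_def)
  have disj1: "P0 \<inter> (\<Union>j\<in>S. P j) = {}" using S(2) by (auto simp: P0_def P_def)
  have disj2: "\<forall>i\<in>S. \<forall>j\<in>S. i \<noteq> j \<longrightarrow> P i \<inter> P j = {}" by (auto simp: P_def)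
  have b0: "bij_betw tl P0 (D S g (c-1))"
  proof (rule bij_betw_byWitness[where f' = "Cons 0"])
    show "\<forall>a\<in>P0. 0 # tl a = a"
    proof
      fix a assume "a \<in> P0"
      then have "a \<noteq> [] \<and> hd a = 0" using ne by (auto simp: P0_def)
      then show "0 # tl a = a" by (metis list.collapse)
    qed
    show "\<forall>a'\<in>D S g (c - 1). tl (0 # a') = a'" by simp
    show "tl ` P0 \<subseteq> D S g (c - 1)"
    proof
      fix t assume "t \<in> tl ` P0"
      then obtain w where w: "w \<in> P0" "t = tl w" by auto
      then have wD: "w \<in> D S g c" by (auto simp: P0_def)
      have wt: "w = 0 # t" using ne[OF wD] w(2) by (metis list.collapse)
      have "ncr t" using ncr_tl[of 0 t] wD wt by (simp add: D_def)
      moreover have "t = [] \<or> hd t = 0" using w by (auto simp: P0_def)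
      ultimately show "t \<in> D S g (c - 1)" using wD wt S(2)
        by (auto simp: D_def split: if_splits)
    qed
    show "Cons 0 ` D S g (c - 1) \<subseteq> P0"
    proof
      fix w assume "w \<in> Cons 0 ` D S g (c - 1)"
      then obtain v where v: "v \<in> D S g (c-1)" "w = 0 # v" by auto
      have "ncr (0 # v)" using v ncr_Cons[of v 0] by (auto simp: D_def)
      with v S(2) c show "w \<in> P0" by (auto simp: D_def P0_def)
    qed
  qed
  have bj: "bij_betw (\<lambda>w. map (rn j) (tl w)) (P j) (D (S-{j}) g (c - 1 + g j))" if jS: "j \<in> S" for j
  proof (rule bij_betw_byWitness[where f' = "\<lambda>v. 0 # ren j (g j) v"])
    have j0: "j \<noteq> 0" using jS S(2) by (cases "j = 0") simp_all
    have gj: "g j > 0" using jS gp by auto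
    have decomp: "\<exists>r. w = 0 # j # r" if "w \<in> P j" for w
    proof -
      from that have "w \<in> D S g c" "tl w \<noteq> []" "hd (tl w) = j" by (auto simp: P_def)
      then show ?thesis using ne by (metis list.collapse)
    qed
    show "\<forall>w\<in>P j. 0 # ren j (g j) (map (rn j) (tl w)) = w"
    proof
      fix w assume w: "w \<in> P j"
      then obtain r where wr: "w = 0 # j # r" using decomp by blast
      have wD: "w \<in> D S g c" using w by (auto simp: P_def)
      have k: "\<not> subseq [0,j] (j # r)" using K1[of j r] wD wr j0 by (auto simp: D_def)
      have cj: "count_list (j # r) j = g j" using wD wr jS j0 by (auto simp: D_def)
      have e: "ren j (count_list (j # r) j) (map (rn j) (j # r)) = j # r" by (rule R7[OF k j0])
      show "0 # ren j (g j) (map (rn j) (tl w)) = w" unfolding wr list.sel(3) by (simp only: e[unfolded cj])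
    qed
    show "\<forall>v\<in>D (S - {j}) g (c - 1 + g j). map (rn j) (tl (0 # ren j (g j) v)) = v"
    proof
      fix v assume "v \<in> D (S - {j}) g (c - 1 + g j)"
      then have "j \<notin> set v" using j0 by (auto simp: D_def)
      then show "map (rn j) (tl (0 # ren j (g j) v)) = v" using R1 by simp
    qed
    show "(\<lambda>w. map (rn j) (tl w)) ` P j \<subseteq> D (S - {j}) g (c - 1 + g j)"
    proof
      fix m assume "m \<in> (\<lambda>w. map (rn j) (tl w)) ` P j"
      then obtain w where w: "w \<in> P j" "m = map (rn j) (tl w)" by auto
      then obtain r where wr: "w = 0 # j # r" using decomp by blast
      have wD: "w \<in> D S g c" using w by (auto simp: P_def)
      have m: "m = map (rn j) (j # r)" using w wr by simp
      have s1: "set m \<subseteq> insert 0 (S - {j})"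
      proof
        fix x assume "x \<in> set m"
        then have "x \<in> rn j ` set (j # r)" using m by (simp only: set_map)
        then obtain y where y: "y \<in> set (j # r)" "x = rn j y" by (rule imageE) simp
        then have "y \<in> insert 0 S" using wD wr by (auto simp: D_def)
        with y show "x \<in> insert 0 (S - {j})" by (auto simp: rn_def)
      qed
      have c0: "count_list (j # r) 0 = c - 1" using wD wr by (auto simp: D_def)
      have cj: "count_list (j # r) j = g j" using wD wr jS j0 by (auto simp: D_def)
      have s2: "count_list m 0 = c - 1 + g j" using cnt_map0[OF j0, of "j#r"] c0 cj m by simp
      have s3: "\<forall>k\<in>S - {j}. count_list m k = g k"
      proof
        fix k assume k: "k \<in> S - {j}"
        then have "k \<noteq> 0" using S(2) by (metis DiffD1)
        with k have "count_list m k = count_list (j # r) k" using cnt_mapa[of k j "j # r"] m by auto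
        also have "\<dots> = count_list w k" using wr \<open>k \<noteq> 0\<close> by simp
        also have "\<dots> = g k" using wD k by (auto simp: D_def)
        finally show "count_list m k = g k" .
      qed
      have s4: "ncr m" using ncr_merge[of j r] wD wr j0 m by (auto simp: D_def)
      have s5: "m \<noteq> [] \<longrightarrow> hd m = 0" using m by simp
      show "m \<in> D (S - {j}) g (c - 1 + g j)" using s1 s2 s3 s4 s5 by (simp add: D_def)
    qed
    show "(\<lambda>v. 0 # ren j (g j) v) ` D (S - {j}) g (c - 1 + g j) \<subseteq> P j"
    proof
      fix w assume "w \<in> (\<lambda>v. 0 # ren j (g j) v) ` D (S - {j}) g (c - 1 + g j)"
      then obtain v where v: "v \<in> D (S - {j}) g (c - 1 + g j)" "w = 0 # ren j (g j) v" by auto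
      have jv: "j \<notin> set v" using v j0 by (auto simp: D_def)
      have cv0: "count_list v 0 = c - 1 + g j" using v by (auto simp: D_def)
      then have "v \<noteq> []" using gj by auto
      then obtain v' where vv: "v = 0 # v'" using v by (cases v) (auto simp: D_def)
      obtain n where gn: "g j = Suc n" using gj by (cases "g j") auto
      have t1: "tl w \<noteq> [] \<and> hd (tl w) = j" using v(2) vv gn by simp
      have w1: "set w \<subseteq> insert 0 S"
        using v R6[of j "g j" v] jS by (auto simp: D_def)
      have w2: "count_list w 0 = c" using v(2) R3[OF j0, of "g j" v] cv0 c by simp
      have w3: "\<forall>k\<in>S. count_list w k = g k"
      proof
        fix k assume k: "k \<in> S"
        show "count_list w k = g k"
        proof (cases "k = j")
          case True
          then show ?thesis using v(2) R2[OF jv j0, of "g j"] cv0 j0 by simp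
        next
          case False
          then have "k \<noteq> 0" using k S(2) by metis
          then have "count_list w k = count_list v k" using v(2) R4[of k j "g j" v] False by simp
          also have "\<dots> = g k" using v k False by (auto simp: D_def)
          finally show ?thesis .
        qed
      qed
      have w4: "ncr w" using v(2) ncr_split[of v j "g j"] v jv j0 vv by (auto simp: D_def)
      show "w \<in> P j" using w1 w2 w3 w4 t1 v(2) by (simp add: P_def D_def)
    qed
  qed
  have "card (D S g c) = card P0 + card (\<Union>j\<in>S. P j)"
    unfolding cover using disj1 fP0 fP S(1) by (intro card_Un_disjoint) auto
  also have "card (\<Union>j\<in>S. P j) = (\<Sum>j\<in>S. card (P j))"
    using S(1) fP disj2 by (intro card_UN_disjoint) auto
  also have "\<dots> = (\<Sum>j\<in>S. card (D (S-{j}) g (c - 1 + g j)))"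
    using bj by (intro sum.cong refl bij_betw_same_card) auto
  also have "card P0 = card (D S g (c-1))" using b0 by (rule bij_betw_same_card)
  finally show ?thesis .
qed

lemma ff_Suc1: "falling_fact a (Suc k) = falling_fact a k * (a - k)"
  by (simp add: falling_fact_def)

lemma ff_Suc2: "falling_fact (Suc a) (Suc k) = Suc a * falling_fact a k"
  unfolding falling_fact_def by (subst prod.lessThan_Suc_shift) simp

lemma ff_0[simp]: "falling_fact a 0 = 1" by (simp add: falling_fact_def)

lemma sub0_nil: "set x \<subseteq> {0::nat} \<Longrightarrow> 0 \<notin> set x \<Longrightarrow> x = []"
  by (cases x) auto

lemma D_empty0: "D {} g 0 = {[]}"
  using sub0_nil by (auto simp: D_def ncr_def count_list_0_iff)

lemma D_ne0: assumes "S \<noteq> {}" "\<forall>j\<in>S. g j > 0" shows "D S g 0 = {}"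
proof (rule ccontr)
  assume "D S g 0 \<noteq> {}"
  then obtain w where w: "w \<in> D S g 0" by auto
  show False
  proof (cases w)
    case Nil
    from assms obtain j where "j \<in> S" "g j > 0" by auto
    with w Nil show False by (auto simp: D_def)
  next
    case (Cons a t)
    with w show False by (auto simp: D_def)
  qed
qed

lemma alg: "c * falling_fact A K * (A - K) + ((K+2)*c + N) * falling_fact A K
   = (c+1) * falling_fact (Suc A) (Suc K)" if "N = K + 2 + e" "A = K + 1 + e + c" for A K N c e :: nat
proof -
  have h: "c * (A - K) + ((K+2)*c + N) = (c+1) * Suc A" using that by (simp add: algebra_simps)
  have "c * falling_fact A K * (A - K) + ((K+2)*c + N) * falling_fact A K
     = (c * (A - K) + ((K+2)*c + N)) * falling_fact A K" by (simp add: algebra_simps)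
  also have "\<dots> = (c+1) * Suc A * falling_fact A K" by (simp only: h)
  also have "\<dots> = (c+1) * falling_fact (Suc A) (Suc K)" unfolding ff_Suc2 by (simp only: mult.assoc)
  finally show ?thesis .
qed

lemma D_formula:
  assumes "finite S" "0 \<notin> S" "\<forall>j\<in>S. g j > 0"
  shows "card (D S g c) = (if S = {} then 1 else c * falling_fact (sum g S + c - 1) (card S - 1))"
  using assms
proof (induction "card S" arbitrary: S c rule: less_induct)
  case less
  note S = less.prems
  show ?case
  proof (induction c)
    case 0
    show ?case
    proof (cases "S = {}")
      case True then show ?thesis by (simp add: D_empty0)
    next
      case False then show ?thesis using D_ne0[OF False S(3)] by simp
    qed
  next
    case (Suc c)
    have rec: "card (D S g (Suc c)) = card (D S g c) + (\<Sum>j\<in>S. card (D (S-{j}) g (c + g j)))"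
      using D_rec[OF S(1) S(2) S(3), of "Suc c"] by simp
    have IHj: "card (D (S-{j}) g (c + g j)) = (if S - {j} = {} then 1 else
        (c + g j) * falling_fact (sum g (S-{j}) + (c + g j) - 1) (card (S-{j}) - 1))" if "j \<in> S" for j
      using that S by (intro less.hyps) (auto simp: card_gt_0_iff intro!: diff_less)
    show ?case
    proof (cases "S = {}")
      case True
      then show ?thesis using rec Suc.IH by simp
    next
      case False
      define n where "n = card S"
      have n1: "n \<ge> 1" using False S(1) by (simp add: n_def Suc_le_eq card_gt_0_iff)
      define N where "N = sum g S"
      have Nn: "N \<ge> n" unfolding N_def n_def
        using S(3) card_eq_sum[of S] sum_mono[of S "\<lambda>_. 1::nat" g] by (simp add: Suc_le_eq)
      show ?thesis
      proof (cases "n = 1")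
        case True
        then have "card S = 1" using n_def by simp
        then obtain j where Sj: "S = {j}" by (rule card_1_singletonE)
        have "card (D S g c) = c" using Suc.IH Sj by simp
        moreover have "(\<Sum>j\<in>S. card (D (S-{j}) g (c + g j))) = 1" using Sj IHj[of j] by simp
        ultimately show ?thesis using rec Sj by simp
      next
        case False
        then have n2: "n \<ge> 2" using n1 by simp
        obtain K where K: "n = K + 2" using n2 by (metis add.commute le_Suc_ex)
        obtain e where e: "N = K + 2 + e" using Nn K by (metis le_Suc_ex)
        define A where "A = K + 1 + e + c"
        have termj: "card (D (S-{j}) g (c + g j)) = (c + g j) * falling_fact A K" if j: "j \<in> S" for j
        proof -
          have ne: "S - {j} \<noteq> {}"
          proof
            assume "S - {j} = {}"
            then have "S = {j}" using j by auto
            then show False using n2 n_def by simp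
          qed
          have sg: "sum g (S-{j}) + g j = N" using sum.remove[OF S(1) j, of g] N_def by simp
          have cd: "card (S-{j}) - 1 = K" using j S(1) K n_def by simp
          have "sum g (S-{j}) + (c + g j) - 1 = A" using sg e A_def by simp
          then show ?thesis using IHj[OF j] ne cd by simp
        qed
        have "(\<Sum>j\<in>S. card (D (S-{j}) g (c + g j))) = (\<Sum>j\<in>S. (c + g j) * falling_fact A K)"
          using termj by (rule sum.cong[OF refl])
        also have "\<dots> = ((K+2)*c + N) * falling_fact A K"
          using K n_def by (simp add: sum_distrib_right[symmetric] sum.distrib N_def algebra_simps)
        finally have s: "(\<Sum>j\<in>S. card (D (S-{j}) g (c + g j))) = ((K+2)*c + N) * falling_fact A K" .
        have ar: "N + c - 1 = A" "n - 1 = Suc K" by (simp_all add: e A_def K)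
        have "card (D S g c) = c * falling_fact (N + c - 1) (n - 1)"
          using Suc.IH \<open>S \<noteq> {}\<close> by (simp add: N_def n_def)
        then have c1: "card (D S g c) = c * (falling_fact A K * (A - K))"
          unfolding ar ff_Suc1 .
        have "card (D S g (Suc c)) = c * (falling_fact A K * (A - K)) + ((K+2)*c + N) * falling_fact A K"
          by (simp only: rec s c1)
        also have "\<dots> = (c+1) * falling_fact (Suc A) (Suc K)"
          using alg[OF e A_def] by (simp only: mult.assoc)
        also have "\<dots> = Suc c * falling_fact (N + Suc c - 1) (n - 1)"
          using ar e A_def by simp
        finally show ?thesis using \<open>S \<noteq> {}\<close> by (simp add: N_def n_def)
      qed
    qed
  qed
qed

lemma subseq_Cons_idx: "subseq (x#xs) (drop k ys) \<longleftrightarrow> (\<exists>i. k \<le> i \<and> i < length ys \<and> ys!i = x \<and> subseq xs (drop (Suc i) ys))"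
proof (induct ys arbitrary: k)
  case Nil then show ?case by simp
next
  case (Cons y ys)
  show ?case
  proof (cases k)
    case 0
    have "subseq (x#xs) (y#ys) \<longleftrightarrow> (x = y \<and> subseq xs ys) \<or> subseq (x#xs) ys"
      by (cases "x = y") (auto dest: subseq_Cons')
    also have "subseq (x#xs) ys \<longleftrightarrow> (\<exists>i. 0 \<le> i \<and> i < length ys \<and> ys!i = x \<and> subseq xs (drop (Suc i) ys))"
      using Cons[of 0] by simp
    finally show ?thesis using 0
      by (auto simp: less_Suc_eq_0_disj)
  next
    case (Suc k')
    have ih: "subseq (x#xs) (drop k' ys) \<longleftrightarrow> (\<exists>i. k' \<le> i \<and> i < length ys \<and> ys!i = x \<and> subseq xs (drop (Suc i) ys))"
      by (rule Cons)
    show ?thesis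
    proof
      assume "subseq (x # xs) (drop k (y # ys))"
      then have "subseq (x#xs) (drop k' ys)" using Suc by simp
      then obtain i where "k' \<le> i \<and> i < length ys \<and> ys!i = x \<and> subseq xs (drop (Suc i) ys)" using ih by blast
      then show "\<exists>i. k \<le> i \<and> i < length (y # ys) \<and> (y # ys) ! i = x \<and> subseq xs (drop (Suc i) (y # ys))"
        using Suc by (intro exI[of _ "Suc i"]) simp
    next
      assume "\<exists>i. k \<le> i \<and> i < length (y # ys) \<and> (y # ys) ! i = x \<and> subseq xs (drop (Suc i) (y # ys))"
      then obtain i where i: "k \<le> i" "i < length (y # ys)" "(y # ys) ! i = x" "subseq xs (drop (Suc i) (y # ys))" by blast
      then obtain i' where i': "i = Suc i'" using Suc by (cases i) auto
      have "\<exists>i. k' \<le> i \<and> i < length ys \<and> ys!i = x \<and> subseq xs (drop (Suc i) ys)"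
        using i i' Suc by (intro exI[of _ i']) simp
      then show "subseq (x # xs) (drop k (y # ys))" using ih Suc by simp
    qed
  qed
qed

lemma subseq4_idx: "subseq [p,q,r,s] w \<longleftrightarrow>
  (\<exists>a b c d. a < b \<and> b < c \<and> c < d \<and> d < length w \<and> a < length w \<and> b < length w \<and> c < length w \<and>
     w!a = p \<and> w!b = q \<and> w!c = r \<and> w!d = s)"
proof -
  have "subseq [p,q,r,s] w = subseq [p,q,r,s] (drop 0 w)" by simp
  also have "\<dots> \<longleftrightarrow> (\<exists>a b c d. a < b \<and> b < c \<and> c < d \<and> d < length w \<and> a < length w \<and> b < length w \<and> c < length w \<and>
     w!a = p \<and> w!b = q \<and> w!c = r \<and> w!d = s)"
    unfolding subseq_Cons_idx by (simp add: Suc_le_eq) blast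
  finally show ?thesis .
qed

lemma nc_iff: "noncrossing w \<longleftrightarrow> ncr w"
proof
  assume nc: "noncrossing w"
  show "ncr w" unfolding ncr_def
  proof (intro allI impI notI)
    fix p q assume pq: "p \<noteq> q" and s: "subseq [p,q,p,q] w"
    from s obtain a b c d where h: "a < b" "b < c" "c < d" "d < length w"
      "w!a = p" "w!b = q" "w!c = p" "w!d = q" unfolding subseq4_idx by blast
    have "\<exists>a b c d. a < b \<and> b < c \<and> c < d \<and> d < length w \<and>
      w ! a = w ! c \<and> w ! b = w ! d \<and> w ! a \<noteq> w ! b"
      using h pq by (intro exI[of _ a] exI[of _ b] exI[of _ c] exI[of _ d]) simp
    with nc show False unfolding noncrossing_def by blast
  qed
next
  assume n: "ncr w"
  show "noncrossing w" unfolding noncrossing_def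
  proof
    assume "\<exists>a b c d. a < b \<and> b < c \<and> c < d \<and> d < length w \<and>
      w ! a = w ! c \<and> w ! b = w ! d \<and> w ! a \<noteq> w ! b"
    then obtain a b c d where h: "a < b" "b < c" "c < d" "d < length w"
      "w ! a = w ! c" "w ! b = w ! d" "w ! a \<noteq> w ! b" by blast
    have "subseq [w!a, w!b, w!a, w!b] w" unfolding subseq4_idx
      using h by (intro exI[of _ a] exI[of _ b] exI[of _ c] exI[of _ d]) simp
    then show False using ncrD[OF n, of "w!a" "w!b"] h by simp
  qed
qed

lemma ncr_Cons_notin: assumes "ncr u" "a \<notin> set u" shows "ncr (a # u)"
  unfolding ncr_def
proof (intro allI impI notI)
  fix p q :: nat assume pq: "p \<noteq> q" and s: "subseq [p,q,p,q] (a#u)"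
  show False
  proof (cases "p = a")
    case True
    with s have "subseq [q,p,q] u" by simp
    then have "p \<in> set u" using list_emb_set[of "(=)" "[q,p,q]" u p] by auto
    with True assms(2) show False by simp
  next
    case False
    with s have "subseq [p,q,p,q] u" by simp
    with assms(1) pq show False using ncrD[of u p q] by simp
  qed
qed

lemma sum_list_eq: "sum_list x = sum (\<lambda>i. x ! (i - 1)) {1..length x}"
proof -
  have "sum_list x = (\<Sum>i = 0..<length x. x ! i)" by (rule sum_list_sum_nth)
  also have "\<dots> = sum (\<lambda>i. x ! (i - 1)) (Suc ` {0..<length x})"
    by (subst sum.reindex) auto
  also have "Suc ` {0..<length x} = {1..length x}" by (auto simp: image_iff)
  finally show ?thesis .
qed

lemma LNC_bij:
  assumes pos: "\<forall>i < length x. x ! i > 0"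
  shows "bij_betw (Cons 0) (LNC x) (D {1..length x} (\<lambda>i. x ! (i - 1)) 1)"
proof (rule bij_betw_byWitness[where f' = tl])
  let ?g = "\<lambda>i. x ! (i - 1)"
  show "\<forall>a\<in>LNC x. tl (0 # a) = a" by simp
  show "\<forall>a'\<in>D {1..length x} ?g 1. 0 # tl a' = a'"
  proof
    fix v assume v: "v \<in> D {1..length x} ?g 1"
    then have "v \<noteq> []" "hd v = 0" by (auto simp: D_def)
    then show "0 # tl v = v" by (metis list.collapse)
  qed
  show "Cons 0 ` LNC x \<subseteq> D {1..length x} ?g 1"
  proof
    fix w assume "w \<in> Cons 0 ` LNC x"
    then obtain u where u: "u \<in> LNC x" "w = 0 # u" by auto
    have u0: "0 \<notin> set u" using u by (auto simp: LNC_def)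
    have "ncr u" using u nc_iff by (auto simp: LNC_def)
    then have "ncr (0 # u)" using ncr_Cons_notin u0 by blast
    then show "w \<in> D {1..length x} ?g 1" using u u0 by (auto simp: LNC_def D_def)
  qed
  show "tl ` D {1..length x} ?g 1 \<subseteq> LNC x"
  proof
    fix t assume "t \<in> tl ` D {1..length x} ?g 1"
    then obtain v where v: "v \<in> D {1..length x} ?g 1" "t = tl v" by auto
    then have "v \<noteq> []" "hd v = 0" by (auto simp: D_def)
    then have vt: "v = 0 # t" using v(2) by (metis list.collapse)
    have t0: "0 \<notin> set t" using v(1) vt by (auto simp: D_def count_list_0_iff)
    have st: "set t \<subseteq> {1..length x}" using v(1) vt t0 by (auto simp: D_def)
    have ct: "\<forall>i\<in>{1..length x}. count_list t i = x ! (i - 1)" using v(1) vt by (auto simp: D_def)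
    have "ncr t" using ncr_tl[of 0 t] v(1) vt by (simp add: D_def)
    then have nt: "noncrossing t" using nc_iff by simp
    have "length t = (\<Sum>i\<in>{1..length x}. count_list t i)" by (rule len_sum[OF st]) simp
    also have "\<dots> = sum ?g {1..length x}" using ct by simp
    also have "\<dots> = sum_list x" by (simp add: sum_list_eq)
    finally show "t \<in> LNC x" using st ct nt by (simp add: LNC_def)
  qed
qed

lemma card_LNC:
  assumes pos: "\<forall>i < length x. x ! i > 0" and m: "length x \<ge> 1"
  shows "card (LNC x) = falling_fact (sum_list x) (length x - 1)" "finite (LNC x)"
proof -
  let ?g = "\<lambda>i. x ! (i - 1)"
  have gp: "\<forall>j\<in>{1..length x}. ?g j > 0" using pos by auto
  have "card (LNC x) = card (D {1..length x} ?g 1)" using LNC_bij[OF pos] by (rule bij_betw_same_card)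
  also have "\<dots> = falling_fact (sum_list x) (length x - 1)"
    using D_formula[of "{1..length x}" ?g 1] gp m by (simp add: sum_list_eq)
  finally show "card (LNC x) = falling_fact (sum_list x) (length x - 1)" .
  show "finite (LNC x)" using LNC_bij[OF pos] D_fin[of "{1..length x}" ?g 1]
    by (simp add: bij_betw_finite)
qed

lemma ncr_rotate1: assumes "ncr w" shows "ncr (rotate1 w)"
proof (cases w)
  case Nil then show ?thesis using assms by simp
next
  case (Cons a t)
  show ?thesis unfolding ncr_def
  proof (intro allI impI notI)
    fix p q :: nat assume pq: "p \<noteq> q" and s: "subseq [p,q,p,q] (rotate1 w)"
    from s Cons have "subseq [p,q,p,q] (t @ [a])" by simp
    then obtain xs1 xs2 where e: "[p,q,p,q] = xs1 @ xs2" and s1: "subseq xs1 t" and s2: "subseq xs2 [a]"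
      by (rule subseq_appendE)
    have "length xs2 \<le> 1" using list_emb_length[OF s2] by simp
    then consider "xs2 = []" | y where "xs2 = [y]" by (cases xs2) auto
    then show False
    proof cases
      case 1
      with e s1 have "subseq [p,q,p,q] t" by simp
      then have "subseq [p,q,p,q] (a # t)" by (rule list_emb.list_emb_Cons)
      from ncrD[OF assms[unfolded Cons] pq this] show False .
    next
      case 2
      have h: "xs1 = [p,q,p] \<and> y = q" using e 2 by (metis append1_eq_conv append_Cons append_Nil)
      then have x1: "xs1 = [p,q,p]" and yq: "y = q" by simp_all
      with s2 2 have qa: "q = a" by (auto split: if_splits)
      from s1 x1 have "subseq [q,p,q,p] (q # t)" by simp
      then have "subseq [q,p,q,p] w" using Cons qa by simp
      from ncrD[OF assms _ this] pq show False by simp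
    qed
  qed
qed

lemma ncr_rotate: "ncr w \<Longrightarrow> ncr (rotate k w)"
  by (induct k) (simp_all add: ncr_rotate1)

lemma count_rotate1: "count_list (rotate1 w) a = count_list w a"
  by (cases w) auto

lemma count_rotate: "count_list (rotate k w) a = count_list w a"
  by (induct k) (simp_all add: count_rotate1)

lemma LNC_rot: "w \<in> LNC x \<Longrightarrow> rotate k w \<in> LNC x"
  using ncr_rotate[of w k] by (simp add: LNC_def count_rotate nc_iff)

lemma two_letters: "a \<in> set z \<Longrightarrow> b \<in> set z \<Longrightarrow> a \<noteq> b \<Longrightarrow> subseq [a,b] z \<or> subseq [b,a] z"
proof -
  assume a: "a \<in> set z" and b: "b \<in> set z" and ab: "a \<noteq> b"
  from a obtain z1 z2 where z: "z = z1 @ a # z2" by (meson split_list)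
  from b z ab have "b \<in> set z1 \<or> b \<in> set z2" by auto
  then show ?thesis
  proof
    assume "b \<in> set z1"
    then have "subseq [b] z1" by (simp add: subseq_singleton_left)
    then have "subseq ([b] @ [a]) (z1 @ [a] @ z2)"
      by (intro list_emb_append_mono) (auto intro: subseq_drop_many)
    then show ?thesis using z by simp
  next
    assume "b \<in> set z2"
    then have "subseq [b] z2" by (simp add: subseq_singleton_left)
    then have "subseq ([] @ a # [b]) (z1 @ a # z2)"
      by (intro list_emb_append_mono) auto
    then show ?thesis using z by simp
  qed
qed

lemma rep_cross: assumes "a \<in> set z" "b \<in> set z" "a \<noteq> b" "n > 1"
  shows "\<not> ncr (concat (replicate n z))"
proof
  assume n: "ncr (concat (replicate n z))"
  define n' where "n' = n - 2"
  have n': "n = Suc (Suc n')" using assms(4) n'_def by simp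
  have cz: "concat (replicate n z) = z @ z @ concat (replicate n' z)" using n' by simp
  from two_letters[OF assms(1-3)] show False
  proof
    assume s: "subseq [a,b] z"
    from list_emb_append_mono[OF s s] have "subseq ([a,b] @ [a,b]) (z @ z)" .
    then have "subseq ([a,b] @ [a,b]) ((z @ z) @ concat (replicate n' z))" by (rule subseq_rev_drop_many)
    then have "subseq [a,b,a,b] (concat (replicate n z))" unfolding cz by simp
    then show False using ncrD[OF n, of a b] ncrD[OF n, of b a] assms(3) by simp
  next
    assume s: "subseq [b,a] z"
    from list_emb_append_mono[OF s s] have "subseq ([b,a] @ [b,a]) (z @ z)" .
    then have "subseq ([b,a] @ [b,a]) ((z @ z) @ concat (replicate n' z))" by (rule subseq_rev_drop_many)
    then have "subseq [b,a,b,a] (concat (replicate n z))" unfolding cz by simp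
    then show False using ncrD[OF n, of a b] ncrD[OF n, of b a] assms(3) by simp
  qed
qed

lemma sum_pos: fixes x :: "nat list" assumes pos: "\<forall>i < length x. x ! i > 0" and m: "length x \<ge> 2" shows "sum_list x > 0"
proof -
  have l0: "0 < length x" using m by linarith
  then have "x ! 0 \<in> set x" by simp
  then have "x ! 0 \<le> sum_list x" by (simp add: member_le_sum_list)
  moreover have "x ! 0 > 0" using pos l0 by blast
  ultimately show ?thesis by simp
qed

lemma no_fix:
  assumes w: "w \<in> LNC x" and pos: "\<forall>i < length x. x ! i > 0" and m: "length x \<ge> 2"
    and d: "0 < d" "d < length w"
  shows "rotate d w \<noteq> w"
proof
  assume r: "rotate d w = w"
  have "rotate d w = drop d w @ take d w" using d by (simp add: rotate_drop_take)
  then have "take d w @ drop d w = drop d w @ take d w" using r by simp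
  moreover have "take d w \<noteq> []" "drop d w \<noteq> []" using d by auto
  ultimately obtain n z where nz: "n > 1" "concat (replicate n z) = take d w @ drop d w"
    using comm_append_is_replicate by metis
  then have wz: "w = concat (replicate n z)" by simp
  have "count_list w 1 = x ! 0" "count_list w 2 = x ! 1" using w m by (auto simp: LNC_def)
  moreover have "0 < length x" "1 < length x" using m by linarith+
  moreover note pos
  ultimately have c12: "count_list w 1 > 0" "count_list w 2 > 0" by simp_all
  note c12 = c12
  have "1 \<in> set w" using c12(1) by (cases "1 \<in> set w") simp_all
  moreover have "2 \<in> set w" using c12(2) by (cases "2 \<in> set w") simp_all
  ultimately have "1 \<in> set w" "2 \<in> set w" by blast+
  then have "1 \<in> set z" "2 \<in> set z" using wz nz(1) by auto
  from rep_cross[OF this _ nz(1)] have "\<not> ncr w" using wz by simp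
  moreover have "ncr w" using w by (simp add: LNC_def nc_iff)
  ultimately show False by simp
qed

lemma orb_card:
  assumes w: "w \<in> LNC x" and pos: "\<forall>i < length x. x ! i > 0" and m: "length x \<ge> 2"
  shows "card {rotate k w | k. True} = length w"
proof -
  let ?L = "length w"
  have Lp: "?L > 0" using w sum_pos[OF pos m] by (simp add: LNC_def)
  have eq: "{rotate k w | k. True} = (\<lambda>k. rotate k w) ` {0..<?L}"
  proof (intro equalityI subsetI)
    fix v assume "v \<in> {rotate k w | k. True}"
    then obtain k where "v = rotate k w" by auto
    then have "v = rotate (k mod ?L) w" by (simp only: rotate_conv_mod[of k w])
    moreover have "k mod ?L < ?L" using Lp by simp
    ultimately show "v \<in> (\<lambda>k. rotate k w) ` {0..<?L}" by auto
  qed auto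
  have inj: "inj_on (\<lambda>k. rotate k w) {0..<?L}"
  proof (rule inj_onI, rule ccontr)
    have key: "False" if ij: "i < j" "j < ?L" "rotate i w = rotate j w" for i j
    proof -
      have "rotate (?L - i) (rotate i w) = rotate (?L - i) (rotate j w)" using ij by simp
      then have "rotate (?L - i + i) w = rotate (?L - i + j) w" by (simp add: rotate_rotate)
      moreover have "?L - i + i = ?L" using ij by simp
      moreover have "rotate (?L - i + j) w = rotate (j - i) w"
      proof -
        have e: "?L - i + j = (j - i) + ?L" using ij by simp
        have "rotate ((j - i) + ?L) w = rotate (j - i) (rotate ?L w)" by (simp only: rotate_rotate)
        also have "rotate ?L w = w" by simp
        finally show ?thesis unfolding e .
      qed
      ultimately have "rotate (j - i) w = w" by simp
      moreover have "0 < j - i" "j - i < ?L" using ij by linarith+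
      ultimately show False using no_fix[OF w pos m, of "j - i"] by blast
    qed
    fix i j assume "i \<in> {0..<?L}" "j \<in> {0..<?L}" "rotate i w = rotate j w" "i \<noteq> j"
    then show False using key[of i j] key[of j i] by (cases "i < j") auto
  qed
  show ?thesis unfolding eq using inj by (simp add: card_image)
qed

lemma orb_eq:
  assumes "v \<in> {rotate k u | k. True}" shows "{rotate k v | k. True} = {rotate k u | k. True}"
proof -
  from assms obtain i where v: "v = rotate i u" by auto
  show ?thesis
  proof (intro equalityI subsetI)
    fix y assume "y \<in> {rotate k v | k. True}"
    then obtain k where "y = rotate k v" by auto
    then have "y = rotate (k + i) u" using v by (simp add: rotate_rotate)
    then show "y \<in> {rotate k u | k. True}" by auto
  next
    fix y assume "y \<in> {rotate k u | k. True}"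
    then obtain k where y: "y = rotate k u" by auto
    show "y \<in> {rotate k v | k. True}"
    proof (cases "u = []")
      case True
      then have "y = rotate 0 v" using y v by simp
      then show ?thesis by blast
    next
      case False
    let ?L = "length u"
    have "rotate k u = rotate (k + ?L * i) u"
      by (subst (1 2) rotate_conv_mod) simp
    also have "k + ?L * i = (k + (?L - 1) * i) + i"
    proof (cases "?L")
      case 0 then show ?thesis using False by simp
    next
      case (Suc l) then show ?thesis by (simp add: algebra_simps)
    qed
    also have "rotate (k + (?L - 1) * i + i) u = rotate (k + (?L - 1) * i) v"
      using v by (simp add: rotate_rotate)
    finally show "y \<in> {rotate k v | k. True}" using y by auto
    qed
  qed
qed

theorem mainTheorem3:
  fixes x :: "nat list"
  assumes "length x \<ge> 2"
    and "\<forall>i < length x. x ! i > 0"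
    and "card {i. i < length x \<and> x ! i = 1} \<le> 1"
  shows "card (LNCN x) = falling_fact (sum_list x - 1) (length x - 2)"
proof -
  note m = assms(1) and pos = assms(2)
  let ?orb = "\<lambda>w. {rotate k w | k. True}"
  let ?N = "sum_list x"
  have m1: "length x \<ge> 1" using m by simp
  have fin: "finite (LNC x)" using card_LNC[OF pos m1] by simp
  have cL: "card (LNC x) = falling_fact ?N (length x - 1)" using card_LNC[OF pos m1] by simp
  have Npos: "?N > 0" by (rule sum_pos[OF pos m])
  have lenN: "length w = ?N" if "w \<in> LNC x" for w using that by (simp add: LNC_def)
  have U: "\<Union>(LNCN x) = LNC x"
  proof (intro equalityI subsetI)
    fix y assume "y \<in> \<Union>(LNCN x)"
    then obtain w k where "w \<in> LNC x" "y = rotate k w" by (auto simp: LNCN_def)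
    then show "y \<in> LNC x" using LNC_rot by simp
  next
    fix y assume "y \<in> LNC x"
    moreover have "y \<in> ?orb y" by (intro CollectI exI[of _ 0]) simp
    ultimately show "y \<in> \<Union>(LNCN x)" by (auto simp: LNCN_def)
  qed
  have disj: "pairwise disjnt (LNCN x)"
    unfolding pairwise_def disjnt_def
  proof (intro ballI impI)
    fix A B assume A: "A \<in> LNCN x" and B: "B \<in> LNCN x" and AB: "A \<noteq> B"
    from A obtain u where u: "A = ?orb u" by (auto simp: LNCN_def)
    from B obtain v where v: "B = ?orb v" by (auto simp: LNCN_def)
    show "A \<inter> B = {}"
    proof (rule ccontr)
      assume "A \<inter> B \<noteq> {}"
      then obtain y where "y \<in> ?orb u" "y \<in> ?orb v" using u v by blast
      then have "?orb y = ?orb u" "?orb y = ?orb v" using orb_eq by blast+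
      with u v AB show False by simp
    qed
  qed
  have finA: "finite A" if "A \<in> LNCN x" for A
  proof -
    from that obtain u where u: "u \<in> LNC x" "A = ?orb u" by (auto simp: LNCN_def)
    have "A \<subseteq> LNC x" using u LNC_rot by auto
    then show ?thesis using fin finite_subset by blast
  qed
  have cardA: "card A = ?N" if "A \<in> LNCN x" for A
  proof -
    from that obtain u where u: "u \<in> LNC x" "A = ?orb u" by (auto simp: LNCN_def)
    then show ?thesis using orb_card[OF u(1) pos m] lenN[OF u(1)] by simp
  qed
  have "card (LNC x) = sum card (LNCN x)" using card_Union_disjoint[OF disj finA] U by simp
  also have "\<dots> = card (LNCN x) * ?N" using cardA by simp
  finally have e1: "card (LNCN x) * ?N = falling_fact ?N (length x - 1)" using cL by simp
  have "falling_fact ?N (length x - 1) = ?N * falling_fact (?N - 1) (length x - 2)"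
  proof -
    have "length x - 1 = Suc (length x - 2)" using m by simp
    moreover have "?N = Suc (?N - 1)" using Npos by simp
    ultimately show ?thesis by (metis ff_Suc2)
  qed
  with e1 have "card (LNCN x) * ?N = falling_fact (?N - 1) (length x - 2) * ?N" by (simp add: mult.commute)
  then show ?thesis using Npos by (metis mult_right_cancel neq0_conv)
qed

end
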